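(* Let $(\mathfrak{g},[\cdot,\ldots,\cdot],\varepsilon)$ be an $n$-Lie color algebra, $(M,\rho)$ a representation of it, $\alpha:\mathfrak{g}\to\mathfrak{g}$ an algebra morphism (of degree zero, with $\alpha([x_1,\ldots,x_n])=[\alpha(x_1),\ldots,\alpha(x_n)]$) and $\mu:M\to M$ a linear map of degree zero such that $\rho(\tilde\alpha(X))\circ\mu=\mu\circ\rho(X)$ for all $X\in\bigwedge^{n-1}\mathfrak{g}$. Then $(M,\mu\circ\rho,\mu)$ is a representation of the multiplicative $n$-Hom-Lie color algebra $(\mathfrak{g},[\cdot,\ldots,\cdot]_\alpha,\varepsilon,\alpha)$, where $[\cdot,\ldots,\cdot]_\alpha=\alpha\circ[\cdot,\ldots,\cdot]$.
   Context: $\mathbb{K}$ is a field of characteristic zero and $\Gamma$ an abelian group. A bicharacter is a map $\varepsilon:\Gamma\times\Gamma\to\mathbb{K}\setminus\{0\}$ with $\varepsilon(a,b)\varepsilon(b,a)=1$, $\varepsilon(a,b+c)=\varepsilon(a,b)\varepsilon(a,c)$, $\varepsilon(a+b,c)=\varepsilon(a,c)\varepsilon(b,c)$. For homogeneous $x,y$, $\varepsilon(x,y)=\varepsilon(|x|,|y|)$ and $\varepsilon(x,y_1+\dots+y_k)=\varepsilon(|x|,|y_1|+\dots+|y_k|)$ ($=1$ for an empty sum); for $X=(x_1,\ldots,x_{n-1})$, $\varepsilon(X,\cdot)$ uses the total degree. An $n$-Hom-Lie color algebra $(\mathfrak{g},[\cdot,\ldots,\cdot],\varepsilon,\alpha)$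 is a $\Gamma$-graded vector space with an $n$-linear bracket of degree zero, a bicharacter $\varepsilon$ and a degree-zero linear map $\alpha$ such that for homogeneous elements: (i) $[x_1,\ldots,x_i,x_{i+1},\ldots,x_n]=-\varepsilon(x_i,x_{i+1})[x_1,\ldots,x_{i+1},x_i,\ldots,x_n]$; (ii) $[\alpha(x_1),\ldots,\alpha(x_{n-1}),[y_1,\ldots,y_n]]=\sum_{i=1}^n\varepsilon(x_1+\dots+x_{n-1},y_1+\dots+y_{i-1})[\alpha(y_1),\ldots,\alpha(y_{i-1}),[x_1,\ldots,x_{n-1},y_i],\alpha(y_{i+1}),\ldots,\alpha(y_n)]$; it is multiplicative if $\alpha$ commutes with the bracket; an $n$-Lie color algebra is the case $\alpha=\mathrm{id}$. $\bigwedge^{n-1}\mathfrak{g}$ is the $\varepsilon$-exterior power; $\tilde\alpha(x_1\wedge\dots\wedge x_{n-1})=\alpha(x_1)\wedge\dots\wedge\alpha(x_{n-1})$, $\mathrm{ad}_X(y)=[x_1,\ldots,x_{n-1},y]$. A representation $(M,\rho,\mu)$ of an $n$-Hom-Lie color algebra is a $\Gamma$-graded space $M$, an $\varepsilon$-skew-symmetric degree-zero linear map $\rho:\bigwedge^{n-1}\mathfrak{g}\to\mathrm{End}(M)$ and a degree-zero linear $\mu:M\to M$ such that for homogeneous $X=(x_1,\ldots,x_{n-1})$, $Y=(y_1,\ldots,y_{n-1})$, $x_n$, and $y_1,\ldots,y_{n-2}$: (a) $\rho(\tilde\alpha(X))\circ\mu=\mu\circ\rho(X)$; (b) $\rho(\tilde\alpha(X))\rho(Y)-\varepsilon(X,Y)\rho(\tilde\alpha(Y))\rho(X)=\sum_{i=1}^{n-1}\varepsilon(X,y_1+\dots+y_{i-1})\rho(\alpha(y_1),\ldots,\alpha(y_{i-1}),\mathrm{ad}_X(y_i),\alpha(y_{i+1}),\ldots,\alpha(y_{n-1}))\circ\mu$;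 (c) $\rho([x_1,\ldots,x_n],\alpha(y_1),\ldots,\alpha(y_{n-2}))\circ\mu=\sum_{i=1}^n(-1)^{n-i}\varepsilon(x_i,x_{i+1}+\dots+x_n)\rho(\alpha(x_1),\ldots,\widehat{x_i},\ldots,\alpha(x_n))\circ\rho(x_i,y_1,\ldots,y_{n-2})$. A representation $(M,\rho)$ of an $n$-Lie color algebra is the case $\alpha=\mathrm{id}_{\mathfrak{g}}$, $\mu=\mathrm{id}_M$. *)

theory Defs
  imports Main "HOL.Vector_Spaces"
begin

(* Conventions.
   - 'k : the ground field (characteristic zero),  'g : the abelian grading group Gamma.
   - A Gamma-graded vector space is a K-vector space (type 'v, scalar multiplication s)
     together with a family G :: 'g => 'v set of subspaces (G a = homogeneous part of degree a)
     such that every vector is uniquely a finite sum of homogeneous components.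
   - n-ary brackets and the maps rho are functions on lists (of length n, resp. n-1);
     a linear map on the epsilon-exterior power Lambda^(n-1) g is represented by the
     corresponding epsilon-skew-symmetric multilinear map on (n-1)-tuples.
   - "x homogeneous of degree d": x : G d. *)

definition bicharacter :: "('g::ab_group_add \<Rightarrow> 'g \<Rightarrow> 'k::field) \<Rightarrow> bool" where
  "bicharacter eps \<longleftrightarrow>
     (\<forall>a b. eps a b \<noteq> 0) \<and>
     (\<forall>a b. eps a b * eps b a = 1) \<and>
     (\<forall>a b c. eps a (b + c) = eps a b * eps a c) \<and>
     (\<forall>a b c. eps (a + b) c = eps a c * eps b c)"

definition graded_vs :: "('k::field \<Rightarrow> 'v::ab_group_add \<Rightarrow> 'v) \<Rightarrow> ('g::ab_group_add \<Rightarrow> 'v set) \<Rightarrow> bool" where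
  "graded_vs s G \<longleftrightarrow>
     vector_space s \<and>
     (\<forall>a. module.subspace s (G a)) \<and>
     (\<forall>v. \<exists>!c. finite {a. c a \<noteq> 0} \<and> (\<forall>a. c a \<in> G a) \<and> v = (\<Sum>a\<in>{a. c a \<noteq> 0}. c a))"

definition homog :: "('g \<Rightarrow> 'v set) \<Rightarrow> 'v list \<Rightarrow> 'g list \<Rightarrow> bool" where
  "homog G xs ds \<longleftrightarrow> list_all2 (\<lambda>x d. x \<in> G d) xs ds"

definition deg0 :: "('g \<Rightarrow> 'v set) \<Rightarrow> ('g \<Rightarrow> 'w set) \<Rightarrow> ('v \<Rightarrow> 'w) \<Rightarrow> bool" where
  "deg0 G H f \<longleftrightarrow> (\<forall>a x. x \<in> G a \<longrightarrow> f x \<in> H a)"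

definition multilinear :: "('k::field \<Rightarrow> 'v::ab_group_add \<Rightarrow> 'v) \<Rightarrow> ('k \<Rightarrow> 'w::ab_group_add \<Rightarrow> 'w)
    \<Rightarrow> nat \<Rightarrow> ('v list \<Rightarrow> 'w) \<Rightarrow> bool" where
  "multilinear s t k F \<longleftrightarrow>
     (\<forall>xs i. length xs = k \<and> i < k \<longrightarrow> Vector_Spaces.linear s t (\<lambda>y. F (xs[i := y])))"

definition swap_adj :: "'a list \<Rightarrow> nat \<Rightarrow> 'a list" where
  "swap_adj xs i = xs[i := xs ! Suc i, Suc i := xs ! i]"

definition del_nth :: "nat \<Rightarrow> 'a list \<Rightarrow> 'a list" where
  "del_nth i xs = take i xs @ drop (Suc i) xs"

definition n_hom_lie_color_alg ::
  "nat \<Rightarrow> ('k::field \<Rightarrow> 'v::ab_group_add \<Rightarrow> 'v) \<Rightarrow> ('g::ab_group_add \<Rightarrow> 'v set)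
   \<Rightarrow> ('v list \<Rightarrow> 'v) \<Rightarrow> ('g \<Rightarrow> 'g \<Rightarrow> 'k) \<Rightarrow> ('v \<Rightarrow> 'v) \<Rightarrow> bool" where
  "n_hom_lie_color_alg n s G br eps \<alpha> \<longleftrightarrow>
     2 \<le> n \<and> graded_vs s G \<and> bicharacter eps \<and>
     multilinear s s n br \<and>
     (\<forall>xs ds. length xs = n \<and> homog G xs ds \<longrightarrow> br xs \<in> G (sum_list ds)) \<and>
     Vector_Spaces.linear s s \<alpha> \<and> deg0 G G \<alpha> \<and>
     (\<forall>xs ds i. length xs = n \<and> homog G xs ds \<and> Suc i < n \<longrightarrow>
        br xs = s (- eps (ds ! i) (ds ! Suc i)) (br (swap_adj xs i))) \<and>
     (\<forall>xs ds ys es. length xs = n - 1 \<and> homog G xs ds \<and> length ys = n \<and> homog G ys es \<longrightarrow>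
        br (map \<alpha> xs @ [br ys]) =
        (\<Sum>i<n. s (eps (sum_list ds) (sum_list (take i es)))
                   (br (map \<alpha> (take i ys) @ [br (xs @ [ys ! i])] @ map \<alpha> (drop (Suc i) ys)))))"

definition multiplicative :: "nat \<Rightarrow> ('v list \<Rightarrow> 'v) \<Rightarrow> ('v \<Rightarrow> 'v) \<Rightarrow> bool" where
  "multiplicative n br \<alpha> \<longleftrightarrow> (\<forall>xs. length xs = n \<longrightarrow> \<alpha> (br xs) = br (map \<alpha> xs))"

definition n_lie_color_alg ::
  "nat \<Rightarrow> ('k::field \<Rightarrow> 'v::ab_group_add \<Rightarrow> 'v) \<Rightarrow> ('g::ab_group_add \<Rightarrow> 'v set)
   \<Rightarrow> ('v list \<Rightarrow> 'v) \<Rightarrow> ('g \<Rightarrow> 'g \<Rightarrow> 'k) \<Rightarrow> bool" where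
  "n_lie_color_alg n s G br eps \<longleftrightarrow> n_hom_lie_color_alg n s G br eps id"

definition hom_rep ::
  "nat \<Rightarrow> ('k::field \<Rightarrow> 'v::ab_group_add \<Rightarrow> 'v) \<Rightarrow> ('g::ab_group_add \<Rightarrow> 'v set)
   \<Rightarrow> ('v list \<Rightarrow> 'v) \<Rightarrow> ('g \<Rightarrow> 'g \<Rightarrow> 'k) \<Rightarrow> ('v \<Rightarrow> 'v)
   \<Rightarrow> ('k \<Rightarrow> 'm::ab_group_add \<Rightarrow> 'm) \<Rightarrow> ('g \<Rightarrow> 'm set)
   \<Rightarrow> ('v list \<Rightarrow> 'm \<Rightarrow> 'm) \<Rightarrow> ('m \<Rightarrow> 'm) \<Rightarrow> bool" where
  "hom_rep n s G br eps \<alpha> t MG \<rho> \<mu> \<longleftrightarrow>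
     graded_vs t MG \<and>
     (\<forall>xs. length xs = n - 1 \<longrightarrow> Vector_Spaces.linear t t (\<rho> xs)) \<and>
     (\<forall>m. multilinear s t (n - 1) (\<lambda>xs. \<rho> xs m)) \<and>
     (\<forall>xs ds a m. length xs = n - 1 \<and> homog G xs ds \<and> m \<in> MG a \<longrightarrow>
        \<rho> xs m \<in> MG (sum_list ds + a)) \<and>
     (\<forall>xs ds i m. length xs = n - 1 \<and> homog G xs ds \<and> Suc i < n - 1 \<longrightarrow>
        \<rho> xs m = t (- eps (ds ! i) (ds ! Suc i)) (\<rho> (swap_adj xs i) m)) \<and>
     Vector_Spaces.linear t t \<mu> \<and> deg0 MG MG \<mu> \<and>
     (\<forall>xs ds m. length xs = n - 1 \<and> homog G xs ds \<longrightarrow>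
        \<rho> (map \<alpha> xs) (\<mu> m) = \<mu> (\<rho> xs m)) \<and>
     (\<forall>xs ds ys es m. length xs = n - 1 \<and> homog G xs ds \<and> length ys = n - 1 \<and> homog G ys es \<longrightarrow>
        \<rho> (map \<alpha> xs) (\<rho> ys m) - t (eps (sum_list ds) (sum_list es)) (\<rho> (map \<alpha> ys) (\<rho> xs m)) =
        (\<Sum>i<n - 1. t (eps (sum_list ds) (sum_list (take i es)))
            (\<rho> (map \<alpha> (take i ys) @ [br (xs @ [ys ! i])] @ map \<alpha> (drop (Suc i) ys)) (\<mu> m)))) \<and>
     (\<forall>xs ds ys es m. length xs = n \<and> homog G xs ds \<and> length ys = n - 2 \<and> homog G ys es \<longrightarrow>
        \<rho> (br xs # map \<alpha> ys) (\<mu> m) =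
        (\<Sum>i<n. t ((- 1) ^ (n - Suc i) * eps (ds ! i) (sum_list (drop (Suc i) ds)))
            (\<rho> (map \<alpha> (del_nth i xs)) (\<rho> (xs ! i # ys) m))))"

definition n_lie_rep ::
  "nat \<Rightarrow> ('k::field \<Rightarrow> 'v::ab_group_add \<Rightarrow> 'v) \<Rightarrow> ('g::ab_group_add \<Rightarrow> 'v set)
   \<Rightarrow> ('v list \<Rightarrow> 'v) \<Rightarrow> ('g \<Rightarrow> 'g \<Rightarrow> 'k)
   \<Rightarrow> ('k \<Rightarrow> 'm::ab_group_add \<Rightarrow> 'm) \<Rightarrow> ('g \<Rightarrow> 'm set) \<Rightarrow> ('v list \<Rightarrow> 'm \<Rightarrow> 'm) \<Rightarrow> bool" where
  "n_lie_rep n s G br eps t MG \<rho> \<longleftrightarrow> hom_rep n s G br eps id t MG \<rho> id"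

end

theory Submission
  imports Defs
begin

lemma lin_mh: "Vector_Spaces.linear s1 s2 f \<Longrightarrow> module_hom s1 s2 f"
  by (simp add: module_hom_iff_linear)

lemma lin_scale: "Vector_Spaces.linear s1 s2 f \<Longrightarrow> f (s1 c x) = s2 c (f x)"
  using module_hom.scale[OF lin_mh] by blast

lemma lin_diff: "Vector_Spaces.linear s1 s2 f \<Longrightarrow> f (x - y) = f x - f y"
  using module_hom.diff[OF lin_mh] by blast

lemma lin_sum: "Vector_Spaces.linear s1 s2 f \<Longrightarrow> f (sum g S) = (\<Sum>a\<in>S. f (g a))"
  using module_hom.sum[OF lin_mh] by blast

lemma lin_comp: "Vector_Spaces.linear s1 s2 f \<Longrightarrow> Vector_Spaces.linear s2 s3 g
   \<Longrightarrow> Vector_Spaces.linear s1 s3 (\<lambda>x. g (f x))"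
  using Vector_Spaces.linear_compose[of s1 s2 f s3 g] by (simp add: o_def)

theorem proposition3p14:
  fixes s :: "'k::field_char_0 \<Rightarrow> 'v::ab_group_add \<Rightarrow> 'v"
    and G :: "'g::ab_group_add \<Rightarrow> 'v set"
    and t :: "'k \<Rightarrow> 'm::ab_group_add \<Rightarrow> 'm"
    and MG :: "'g \<Rightarrow> 'm set"
    and br :: "'v list \<Rightarrow> 'v" and eps :: "'g \<Rightarrow> 'g \<Rightarrow> 'k"
    and \<rho> :: "'v list \<Rightarrow> 'm \<Rightarrow> 'm" and \<alpha> :: "'v \<Rightarrow> 'v" and \<mu> :: "'m \<Rightarrow> 'm"
  assumes alg: "n_lie_color_alg n s G br eps"
    and rep: "n_lie_rep n s G br eps t MG \<rho>"
    and \<alpha>_lin: "Vector_Spaces.linear s s \<alpha>" and \<alpha>_deg: "deg0 G G \<alpha>"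
    and \<alpha>_hom: "\<forall>xs. length xs = n \<longrightarrow> \<alpha> (br xs) = br (map \<alpha> xs)"
    and \<mu>_lin: "Vector_Spaces.linear t t \<mu>" and \<mu>_deg: "deg0 MG MG \<mu>"
    and compat: "\<forall>xs m. length xs = n - 1 \<longrightarrow> \<rho> (map \<alpha> xs) (\<mu> m) = \<mu> (\<rho> xs m)"
  shows "n_hom_lie_color_alg n s G (\<lambda>xs. \<alpha> (br xs)) eps \<alpha>
       \<and> multiplicative n (\<lambda>xs. \<alpha> (br xs)) \<alpha>
       \<and> hom_rep n s G (\<lambda>xs. \<alpha> (br xs)) eps \<alpha> t MG (\<lambda>xs. \<mu> \<circ> \<rho> xs) \<mu>"
proof -
  note A = alg[unfolded n_lie_color_alg_def n_hom_lie_color_alg_def]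
  note R = rep[unfolded n_lie_rep_def hom_rep_def]
  have n2: "2 \<le> n" and gv: "graded_vs s G" and bic: "bicharacter eps"
    and ml: "multilinear s s n br"
    and degbr: "\<forall>xs ds. length xs = n \<and> homog G xs ds \<longrightarrow> br xs \<in> G (sum_list ds)"
    and skew: "\<forall>xs ds i. length xs = n \<and> homog G xs ds \<and> Suc i < n \<longrightarrow>
        br xs = s (- eps (ds ! i) (ds ! Suc i)) (br (swap_adj xs i))"
    and jac: "\<forall>xs ds ys es. length xs = n - 1 \<and> homog G xs ds \<and> length ys = n \<and> homog G ys es \<longrightarrow>
        br (xs @ [br ys]) =
        (\<Sum>i<n. s (eps (sum_list ds) (sum_list (take i es)))
                   (br (take i ys @ [br (xs @ [ys ! i])] @ drop (Suc i) ys)))"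
    using A by auto
  have gvM: "graded_vs t MG"
    and rlin: "\<forall>xs. length xs = n - 1 \<longrightarrow> Vector_Spaces.linear t t (\<rho> xs)"
    and rml: "\<forall>m. multilinear s t (n - 1) (\<lambda>xs. \<rho> xs m)"
    and rdeg: "\<forall>xs ds a m. length xs = n - 1 \<and> homog G xs ds \<and> m \<in> MG a \<longrightarrow>
        \<rho> xs m \<in> MG (sum_list ds + a)"
    and rskew: "\<forall>xs ds i m. length xs = n - 1 \<and> homog G xs ds \<and> Suc i < n - 1 \<longrightarrow>
        \<rho> xs m = t (- eps (ds ! i) (ds ! Suc i)) (\<rho> (swap_adj xs i) m)"
    and rb: "\<forall>xs ds ys es m. length xs = n - 1 \<and> homog G xs ds \<and> length ys = n - 1 \<and> homog G ys es \<longrightarrow>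
        \<rho> xs (\<rho> ys m) - t (eps (sum_list ds) (sum_list es)) (\<rho> ys (\<rho> xs m)) =
        (\<Sum>i<n - 1. t (eps (sum_list ds) (sum_list (take i es)))
            (\<rho> (take i ys @ [br (xs @ [ys ! i])] @ drop (Suc i) ys) m))"
    and rc: "\<forall>xs ds ys es m. length xs = n \<and> homog G xs ds \<and> length ys = n - 2 \<and> homog G ys es \<longrightarrow>
        \<rho> (br xs # ys) m =
        (\<Sum>i<n. t ((- 1) ^ (n - Suc i) * eps (ds ! i) (sum_list (drop (Suc i) ds)))
            (\<rho> (del_nth i xs) (\<rho> (xs ! i # ys) m)))"
    using R by auto
  have P1: "n_hom_lie_color_alg n s G (\<lambda>xs. \<alpha> (br xs)) eps \<alpha>"
    unfolding n_hom_lie_color_alg_def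
  proof (intro conjI allI impI)
    show "multilinear s s n (\<lambda>xs. \<alpha> (br xs))"
      unfolding multilinear_def
    proof (intro allI impI)
      fix xs :: "'v list" and i assume "length xs = n \<and> i < n"
      then have "Vector_Spaces.linear s s (\<lambda>y. br (xs[i := y]))" using ml unfolding multilinear_def by blast
      then show "Vector_Spaces.linear s s (\<lambda>y. \<alpha> (br (xs[i := y])))" using lin_comp[OF _ \<alpha>_lin] by blast
    qed
  next
    fix xs ds assume "length xs = n \<and> homog G xs ds"
    then show "\<alpha> (br xs) \<in> G (sum_list ds)" using degbr \<alpha>_deg unfolding deg0_def by blast
  next
    fix xs ds i assume "length xs = n \<and> homog G xs ds \<and> Suc i < n"
    then show "\<alpha> (br xs) = s (- eps (ds ! i) (ds ! Suc i)) (\<alpha> (br (swap_adj xs i)))"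
      using skew lin_scale[OF \<alpha>_lin] by metis
  next
    fix xs ds ys es assume h: "length xs = n - 1 \<and> homog G xs ds \<and> length ys = n \<and> homog G ys es"
    have e1: "\<alpha> (br (map \<alpha> xs @ [\<alpha> (br ys)])) = \<alpha> (\<alpha> (br (xs @ [br ys])))"
      using h n2 \<alpha>_hom by simp
    have e2: "\<alpha> (br (map \<alpha> (take i ys) @ [\<alpha> (br (xs @ [ys ! i]))] @ map \<alpha> (drop (Suc i) ys)))
       = \<alpha> (\<alpha> (br (take i ys @ [br (xs @ [ys ! i])] @ drop (Suc i) ys)))" if "i < n" for i
    proof -
      have "length (take i ys @ [br (xs @ [ys ! i])] @ drop (Suc i) ys) = n"
        using h that by simp
      then show ?thesis using \<alpha>_hom h n2 by simp
    qed
    show "\<alpha> (br (map \<alpha> xs @ [\<alpha> (br ys)])) =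
        (\<Sum>i<n. s (eps (sum_list ds) (sum_list (take i es)))
          (\<alpha> (br (map \<alpha> (take i ys) @ [\<alpha> (br (xs @ [ys ! i]))] @ map \<alpha> (drop (Suc i) ys)))))"
    proof -
      have "\<alpha> (\<alpha> (br (xs @ [br ys]))) = \<alpha> (\<alpha> (\<Sum>i<n. s (eps (sum_list ds) (sum_list (take i es)))
                   (br (take i ys @ [br (xs @ [ys ! i])] @ drop (Suc i) ys))))"
        using jac[rule_format, of xs ds ys es] h by (simp only:)
      also have "\<dots> = (\<Sum>i<n. s (eps (sum_list ds) (sum_list (take i es)))
                   (\<alpha> (\<alpha> (br (take i ys @ [br (xs @ [ys ! i])] @ drop (Suc i) ys)))))"
        by (simp only: lin_sum[OF \<alpha>_lin] lin_scale[OF \<alpha>_lin])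
      also have "\<dots> = (\<Sum>i<n. s (eps (sum_list ds) (sum_list (take i es)))
          (\<alpha> (br (map \<alpha> (take i ys) @ [\<alpha> (br (xs @ [ys ! i]))] @ map \<alpha> (drop (Suc i) ys)))))"
        by (rule sum.cong) (simp_all only: e2 lessThan_iff)
      finally show ?thesis unfolding e1 .
    qed
  qed (use n2 gv bic \<alpha>_lin \<alpha>_deg in auto)
  have P2: "multiplicative n (\<lambda>xs. \<alpha> (br xs)) \<alpha>"
    unfolding multiplicative_def using \<alpha>_hom by simp
  have P3: "hom_rep n s G (\<lambda>xs. \<alpha> (br xs)) eps \<alpha> t MG (\<lambda>xs. \<mu> \<circ> \<rho> xs) \<mu>"
    unfolding hom_rep_def
  proof (intro conjI allI impI)
    fix xs :: "'v list" assume "length xs = n - 1"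
    then show "Vector_Spaces.linear t t (\<mu> \<circ> \<rho> xs)"
      using rlin \<mu>_lin Vector_Spaces.linear_compose by blast
  next
    fix m
    show "multilinear s t (n - 1) (\<lambda>xs. (\<mu> \<circ> \<rho> xs) m)"
      unfolding multilinear_def
    proof (intro allI impI)
      fix xs :: "'v list" and i assume "length xs = n - 1 \<and> i < n - 1"
      then have "Vector_Spaces.linear s t (\<lambda>y. \<rho> (xs[i := y]) m)" using rml unfolding multilinear_def by blast
      then show "Vector_Spaces.linear s t (\<lambda>y. (\<mu> \<circ> \<rho> (xs[i := y])) m)" using lin_comp[OF _ \<mu>_lin] by simp
    qed
  next
    fix xs ds a m assume "length xs = n - 1 \<and> homog G xs ds \<and> m \<in> MG a"
    then show "(\<mu> \<circ> \<rho> xs) m \<in> MG (sum_list ds + a)" using rdeg \<mu>_deg unfolding deg0_def by auto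
  next
    fix xs ds i m assume "length xs = n - 1 \<and> homog G xs ds \<and> Suc i < n - 1"
    then show "(\<mu> \<circ> \<rho> xs) m = t (- eps (ds ! i) (ds ! Suc i)) ((\<mu> \<circ> \<rho> (swap_adj xs i)) m)"
      using rskew lin_scale[OF \<mu>_lin] by (metis comp_apply)
  next
    fix xs :: "'v list" and ds m assume "length xs = n - 1 \<and> homog G xs ds"
    then show "(\<mu> \<circ> \<rho> (map \<alpha> xs)) (\<mu> m) = \<mu> ((\<mu> \<circ> \<rho> xs) m)" using compat by simp
  next
    fix xs ds ys es m
    assume h: "length xs = n - 1 \<and> homog G xs ds \<and> length ys = n - 1 \<and> homog G ys es"
    have e2: "(\<mu> \<circ> \<rho> (map \<alpha> (take i ys) @ [\<alpha> (br (xs @ [ys ! i]))] @ map \<alpha> (drop (Suc i) ys))) (\<mu> m)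
       = \<mu> (\<mu> (\<rho> (take i ys @ [br (xs @ [ys ! i])] @ drop (Suc i) ys) m))" if "i < n - 1" for i
    proof -
      have "length (take i ys @ [br (xs @ [ys ! i])] @ drop (Suc i) ys) = n - 1"
        using h that by simp
      then show ?thesis using compat[rule_format, of "take i ys @ [br (xs @ [ys ! i])] @ drop (Suc i) ys" m] by simp
    qed
    have "(\<mu> \<circ> \<rho> (map \<alpha> xs)) ((\<mu> \<circ> \<rho> ys) m) -
        t (eps (sum_list ds) (sum_list es)) ((\<mu> \<circ> \<rho> (map \<alpha> ys)) ((\<mu> \<circ> \<rho> xs) m))
       = \<mu> (\<mu> (\<rho> xs (\<rho> ys m) - t (eps (sum_list ds) (sum_list es)) (\<rho> ys (\<rho> xs m))))"
      using h compat by (simp add: lin_diff[OF \<mu>_lin] lin_scale[OF \<mu>_lin])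
    also have "\<dots> = (\<Sum>i<n - 1. t (eps (sum_list ds) (sum_list (take i es)))
            ((\<mu> \<circ> \<rho> (map \<alpha> (take i ys) @ [\<alpha> (br (xs @ [ys ! i]))] @ map \<alpha> (drop (Suc i) ys))) (\<mu> m)))"
    proof -
      have "\<mu> (\<mu> (\<rho> xs (\<rho> ys m) - t (eps (sum_list ds) (sum_list es)) (\<rho> ys (\<rho> xs m))))
        = \<mu> (\<mu> (\<Sum>i<n - 1. t (eps (sum_list ds) (sum_list (take i es)))
            (\<rho> (take i ys @ [br (xs @ [ys ! i])] @ drop (Suc i) ys) m)))"
        using rb[rule_format, of xs ds ys es m] h by (simp only:)
      also have "\<dots> = (\<Sum>i<n - 1. t (eps (sum_list ds) (sum_list (take i es)))
            (\<mu> (\<mu> (\<rho> (take i ys @ [br (xs @ [ys ! i])] @ drop (Suc i) ys) m))))"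
        by (simp only: lin_sum[OF \<mu>_lin] lin_scale[OF \<mu>_lin])
      also have "\<dots> = (\<Sum>i<n - 1. t (eps (sum_list ds) (sum_list (take i es)))
            ((\<mu> \<circ> \<rho> (map \<alpha> (take i ys) @ [\<alpha> (br (xs @ [ys ! i]))] @ map \<alpha> (drop (Suc i) ys))) (\<mu> m)))"
        by (rule sum.cong) (simp_all only: e2 lessThan_iff)
      finally show ?thesis .
    qed
    finally show "(\<mu> \<circ> \<rho> (map \<alpha> xs)) ((\<mu> \<circ> \<rho> ys) m) -
        t (eps (sum_list ds) (sum_list es)) ((\<mu> \<circ> \<rho> (map \<alpha> ys)) ((\<mu> \<circ> \<rho> xs) m)) =
        (\<Sum>i<n - 1. t (eps (sum_list ds) (sum_list (take i es)))
            ((\<mu> \<circ> \<rho> (map \<alpha> (take i ys) @ [\<alpha> (br (xs @ [ys ! i]))] @ map \<alpha> (drop (Suc i) ys))) (\<mu> m)))" .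
  next
    fix xs ds ys es m
    assume h: "length xs = n \<and> homog G xs ds \<and> length ys = n - 2 \<and> homog G ys es"
    have l1: "length (br xs # ys) = n - 1" using h n2 by simp
    have e1: "(\<mu> \<circ> \<rho> (\<alpha> (br xs) # map \<alpha> ys)) (\<mu> m) = \<mu> (\<mu> (\<rho> (br xs # ys) m))"
      using compat[rule_format, OF l1, of m] by simp
    have e2: "(\<mu> \<circ> \<rho> (map \<alpha> (del_nth i xs))) ((\<mu> \<circ> \<rho> (xs ! i # ys)) m)
       = \<mu> (\<mu> (\<rho> (del_nth i xs) (\<rho> (xs ! i # ys) m)))" if "i < n" for i
    proof -
      have "length (del_nth i xs) = n - 1" using h that by (simp add: del_nth_def)
      then show ?thesis using compat by simp
    qed
    show "(\<mu> \<circ> \<rho> (\<alpha> (br xs) # map \<alpha> ys)) (\<mu> m) =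
        (\<Sum>i<n. t ((- 1) ^ (n - Suc i) * eps (ds ! i) (sum_list (drop (Suc i) ds)))
            ((\<mu> \<circ> \<rho> (map \<alpha> (del_nth i xs))) ((\<mu> \<circ> \<rho> (xs ! i # ys)) m)))"
    proof -
      have "\<mu> (\<mu> (\<rho> (br xs # ys) m)) = \<mu> (\<mu> (\<Sum>i<n. t ((- 1) ^ (n - Suc i) * eps (ds ! i) (sum_list (drop (Suc i) ds)))
            (\<rho> (del_nth i xs) (\<rho> (xs ! i # ys) m))))"
        using rc[rule_format, of xs ds ys es m] h by (simp only:)
      also have "\<dots> = (\<Sum>i<n. t ((- 1) ^ (n - Suc i) * eps (ds ! i) (sum_list (drop (Suc i) ds)))
            (\<mu> (\<mu> (\<rho> (del_nth i xs) (\<rho> (xs ! i # ys) m)))))"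
        by (simp only: lin_sum[OF \<mu>_lin] lin_scale[OF \<mu>_lin])
      also have "\<dots> = (\<Sum>i<n. t ((- 1) ^ (n - Suc i) * eps (ds ! i) (sum_list (drop (Suc i) ds)))
            ((\<mu> \<circ> \<rho> (map \<alpha> (del_nth i xs))) ((\<mu> \<circ> \<rho> (xs ! i # ys)) m)))"
        by (rule sum.cong) (simp_all only: e2 lessThan_iff)
      finally show ?thesis unfolding e1 .
    qed
  qed (use gvM \<mu>_lin \<mu>_deg in auto)
  show ?thesis using P1 P2 P3 by blast
qed

end
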